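(* Let $H$ be a Hilbert $C^*$-module, $Q\in\mathcal{L}(H)$ an idempotent and $U\in\mathcal{L}(H)$ a partial isometry. If $U^*UQ=QU^*U$, then $UQU^*$ is an idempotent and $m(UQU^* )=U\,m(Q)\,U^*$.
   Context: $H$ is a Hilbert module over a $C^*$-algebra, $\mathcal{L}(H)$ the adjointable operators. For $T$, $|T|=(T^*T)^{1/2}$, and $T^\dagger$ is the Moore–Penrose inverse (unique $X$ with $TXT=T$, $XTX=X$, $(TX)^*=TX$, $(XT)^*=XT$; exists iff $\mathcal{R}(T)$ closed). The matched projection of an idempotent $Q$ is the projection $m(Q)=\tfrac12(|Q^*|+Q^* )|Q^*|^\dagger(|Q^*|+I)^{-1}(|Q^*|+Q)$. *)

theory Defs
  imports Complex_Main
begin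

text \<open>Abstract unital C*-algebra (complex scalars, involution adj, C*-identity).
  The algebra L(H) of adjointable operators on a Hilbert C*-module is such an algebra.\<close>

class cstar_algebra = real_normed_algebra_1 + banach +
  fixes scaleC :: "complex \<Rightarrow> 'a \<Rightarrow> 'a"
    and adj :: "'a \<Rightarrow> 'a"
  assumes scaleC_add_right: "scaleC c (x + y) = scaleC c x + scaleC c y"
    and scaleC_add_left: "scaleC (c + d) x = scaleC c x + scaleC d x"
    and scaleC_scaleC: "scaleC c (scaleC d x) = scaleC (c * d) x"
    and scaleC_one: "scaleC 1 x = x"
    and scaleR_scaleC: "scaleR r x = scaleC (complex_of_real r) x"
    and norm_scaleC: "norm (scaleC c x) = cmod c * norm x"
    and scaleC_mult_left: "scaleC c x * y = scaleC c (x * y)"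
    and scaleC_mult_right: "x * scaleC c y = scaleC c (x * y)"
    and adj_adj: "adj (adj x) = x"
    and adj_add: "adj (x + y) = adj x + adj y"
    and adj_scaleC: "adj (scaleC c x) = scaleC (cnj c) (adj x)"
    and adj_mult: "adj (x * y) = adj y * adj x"
    and cstar_identity: "norm (adj x * x) = (norm x)\<^sup>2"

definition positive :: "'a::cstar_algebra \<Rightarrow> bool" where
  "positive a \<longleftrightarrow> (\<exists>b. a = adj b * b)"

definition csqrt :: "'a::cstar_algebra \<Rightarrow> 'a" where
  "csqrt a = (THE r. positive r \<and> r * r = a)"

definition cabs :: "'a::cstar_algebra \<Rightarrow> 'a" where
  "cabs t = csqrt (adj t * t)"

definition mp_inv :: "'a::cstar_algebra \<Rightarrow> 'a" where
  "mp_inv t = (THE x. t * x * t = t \<and> x * t * x = x \<and>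
                      adj (t * x) = t * x \<and> adj (x * t) = x * t)"

definition ainv :: "'a::cstar_algebra \<Rightarrow> 'a" where
  "ainv x = (THE y. x * y = 1 \<and> y * x = 1)"

definition idempotent :: "'a::cstar_algebra \<Rightarrow> bool" where
  "idempotent q \<longleftrightarrow> q * q = q"

definition projection :: "'a::cstar_algebra \<Rightarrow> bool" where
  "projection p \<longleftrightarrow> p * p = p \<and> adj p = p"

definition partial_isometry :: "'a::cstar_algebra \<Rightarrow> bool" where
  "partial_isometry u \<longleftrightarrow> projection (adj u * u)"

definition matched_proj :: "'a::cstar_algebra \<Rightarrow> 'a" where
  "matched_proj q = (1/2::real) *\<^sub>R
     ((cabs (adj q) + adj q) * mp_inv (cabs (adj q)) * ainv (cabs (adj q) + 1)
      * (cabs (adj q) + q))"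

end

theory Submission
  imports Defs "HOL-Computational_Algebra.Formal_Power_Series"
begin

definition cf :: "nat \<Rightarrow> real" where
  "cf n = (-1)^n * ((1/2::real) gchoose n)"

lemma cf_0 [simp]: "cf 0 = 1"
  by (simp add: cf_def)

lemma cf_Suc: "cf (Suc n) = cf n * (of_nat n - 1/2) / of_nat (Suc n)"
proof -
  have h: "(1/2::real) * ((1/2) gchoose n) = of_nat n * ((1/2) gchoose n) + of_nat (Suc n) * ((1/2) gchoose (Suc n))"
    by (rule gbinomial_mult_1)
  have g: "((1/2::real) gchoose (Suc n)) = (1/2 - of_nat n) * ((1/2) gchoose n) / of_nat (Suc n)"
  proof -
    have "of_nat (Suc n) * ((1/2::real) gchoose (Suc n)) = (1/2 - of_nat n) * ((1/2) gchoose n)"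
      using h by (simp add: algebra_simps)
    thus ?thesis by (simp add: field_simps del: of_nat_Suc)
  qed
  show ?thesis unfolding cf_def g by (simp add: field_simps del: of_nat_Suc)
qed

lemma cf_Suc_nonpos: "cf (Suc n) \<le> 0"
proof (induction n)
  case 0 then show ?case by (simp add: cf_Suc)
next
  case (Suc n)
  have "cf (Suc (Suc n)) = cf (Suc n) * (of_nat (Suc n) - 1/2) / of_nat (Suc (Suc n))"
    by (rule cf_Suc)
  moreover have "of_nat (Suc n) - 1/2 \<ge> (0::real)" by simp
  ultimately show ?case using Suc.IH
    by (simp add: divide_nonpos_pos mult_nonpos_nonneg del: of_nat_Suc)
qed

lemma cf_partial: "(\<Sum>k\<le>N. cf k) = (1 - 2 * of_nat N) * cf N"
proof (induction N)
  case 0 then show ?case by simp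
next
  case (Suc N)
  have "(\<Sum>k\<le>Suc N. cf k) = (1 - 2 * of_nat N) * cf N + cf (Suc N)"
    using Suc.IH by simp
  also have "\<dots> = (1 - 2 * of_nat (Suc N)) * cf (Suc N)"
    unfolding cf_Suc by (simp add: field_simps del: of_nat_Suc)
  finally show ?case .
qed

lemma cf_partial_nonneg: "(\<Sum>k\<le>N. cf k) \<ge> 0"
proof (cases N)
  case 0 then show ?thesis by simp
next
  case (Suc M)
  have "cf N \<le> 0" using Suc cf_Suc_nonpos by simp
  moreover have "1 - 2 * real N \<le> 0" using Suc by simp
  ultimately show ?thesis unfolding cf_partial by (simp add: mult_nonpos_nonpos)
qed

lemma cf_tail_bound: "(\<Sum>k\<le>N. \<bar>cf (Suc k)\<bar>) \<le> 1"
proof -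
  have "(\<Sum>k\<le>N. \<bar>cf (Suc k)\<bar>) = - (\<Sum>k\<le>N. cf (Suc k))"
    using cf_Suc_nonpos by (simp add: sum_negf[symmetric] abs_of_nonpos)
  also have "(\<Sum>k\<le>N. cf (Suc k)) = (\<Sum>k\<le>Suc N. cf k) - 1"
    by (simp add: sum.atMost_Suc_shift del: sum.atMost_Suc)
  finally show ?thesis using cf_partial_nonneg[of "Suc N"] by simp
qed

lemma summable_cf_tail: "summable (\<lambda>k. \<bar>cf (Suc k)\<bar>)"
  by (rule bounded_imp_summable[where B=1]) (auto intro: cf_tail_bound)

lemma summable_cf: "summable (\<lambda>k. \<bar>cf k\<bar>)"
  using summable_cf_tail summable_Suc_iff[of "\<lambda>k. \<bar>cf k\<bar>"] by simp

lemma suminf_cf_tail: "(\<Sum>k. \<bar>cf (Suc k)\<bar>) \<le> 1"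
proof (rule suminf_le_const[OF summable_cf_tail])
  fix n
  show "sum (\<lambda>k. \<bar>cf (Suc k)\<bar>) {..<n} \<le> 1"
  proof (cases n)
    case 0 then show ?thesis by simp
  next
    case (Suc m)
    then have "{..<n} = {..m}" by auto
    then show ?thesis using cf_tail_bound by simp
  qed
qed

lemma cf_conv: "(\<Sum>i\<le>n. cf i * cf (n - i)) = (if n = 0 then 1 else if n = 1 then -1 else 0)"
proof -
  have "(\<Sum>i\<le>n. cf i * cf (n - i)) = (\<Sum>i\<in>{0..n}. (-1)^n * (((1/2::real) gchoose i) * ((1/2) gchoose (n - i))))"
    by (rule sum.cong) (auto simp: cf_def power_add[symmetric] atLeast0AtMost)
  also have "\<dots> = (-1)^n * ((1/2 + 1/2::real) gchoose n)"
    by (simp add: sum_distrib_left[symmetric] gbinomial_Vandermonde)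
  also have "(1/2 + 1/2::real) gchoose n = of_nat (1 choose n)"
    using binomial_gbinomial[of 1 n, where 'a=real] by simp
  finally show ?thesis
    by (cases n; cases "n = 1") (auto simp: binomial_eq_0)
qed

lemma scaleC_zero_right [simp]: "scaleC c (0::'a::cstar_algebra) = 0"
proof -
  have "scaleC c (0::'a) = scaleC c 0 + scaleC c 0" by (metis add_0 scaleC_add_right)
  thus ?thesis by simp
qed

lemma scaleC_zero_left [simp]: "scaleC 0 (x::'a::cstar_algebra) = 0"
  using scaleR_scaleC[of 0 x] by simp

lemma scaleC_minus_right: "scaleC c (- (x::'a::cstar_algebra)) = - scaleC c x"
  by (metis add.right_inverse add_eq_0_iff scaleC_add_right scaleC_zero_right)

lemma scaleC_diff_right: "scaleC c ((x::'a::cstar_algebra) - y) = scaleC c x - scaleC c y"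
  by (metis diff_conv_add_uminus scaleC_add_right scaleC_minus_right)

lemma scaleC_minus_left: "scaleC (- c) (x::'a::cstar_algebra) = - scaleC c x"
  by (metis add.right_inverse add_eq_0_iff scaleC_add_left scaleC_zero_left)

lemma scaleC_of_real: "scaleC (complex_of_real r) (x::'a::cstar_algebra) = r *\<^sub>R x"
  by (simp add: scaleR_scaleC)

lemma scaleC_ii_ii: "scaleC \<i> (scaleC \<i> (x::'a::cstar_algebra)) = - x"
proof -
  have "scaleC \<i> (scaleC \<i> x) = scaleC (-1) x" by (simp add: scaleC_scaleC)
  also have "\<dots> = - x" by (simp add: scaleC_minus_left scaleC_one)
  finally show ?thesis .
qed

lemma adj_zero [simp]: "adj (0::'a::cstar_algebra) = 0"
proof -
  have "adj (0::'a) = adj 0 + adj 0" by (metis add_0 adj_add)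
  thus ?thesis by simp
qed

lemma adj_minus: "adj (- (x::'a::cstar_algebra)) = - adj x"
  by (metis add.right_inverse add_eq_0_iff adj_add adj_zero)

lemma adj_diff: "adj ((x::'a::cstar_algebra) - y) = adj x - adj y"
  by (metis adj_add adj_minus diff_conv_add_uminus)

lemma adj_one [simp]: "adj (1::'a::cstar_algebra) = 1"
proof -
  have "adj (1::'a) = adj 1 * adj (adj 1)" by (simp only: adj_adj mult_1_right)
  also have "\<dots> = adj (adj 1 * 1)" by (simp only: adj_mult)
  also have "\<dots> = 1" by (simp only: adj_adj mult_1_right)
  finally show ?thesis .
qed

lemma adj_scaleR: "adj (r *\<^sub>R (x::'a::cstar_algebra)) = r *\<^sub>R adj x"
  by (simp add: scaleR_scaleC adj_scaleC)

lemma adj_of_real [simp]: "adj (of_real r :: 'a::cstar_algebra) = of_real r"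
  by (simp add: of_real_def adj_scaleR)

lemma adj_ii: "adj (scaleC \<i> (x::'a::cstar_algebra)) = - scaleC \<i> (adj x)"
  by (simp add: adj_scaleC scaleC_minus_left)

lemma adj_power: "adj ((x::'a::cstar_algebra) ^ n) = (adj x) ^ n"
  by (induction n) (simp_all add: adj_mult power_commutes)

lemma norm_adj_le: "norm (adj (x::'a::cstar_algebra)) \<le> norm x"
proof (cases "adj x = 0")
  case True then show ?thesis by simp
next
  case False
  have "(norm (adj x))^2 = norm (adj (adj x) * adj x)" by (rule cstar_identity[symmetric])
  also have "\<dots> = norm (x * adj x)" by (simp add: adj_adj)
  also have "\<dots> \<le> norm x * norm (adj x)" by (rule norm_mult_ineq)
  finally have "norm (adj x) * norm (adj x) \<le> norm x * norm (adj x)" by (simp add: power2_eq_square)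
  moreover have "norm (adj x) > 0" using False by simp
  ultimately show ?thesis by simp
qed

lemma norm_adj [simp]: "norm (adj (x::'a::cstar_algebra)) = norm x"
  by (metis antisym adj_adj norm_adj_le)

lemma bounded_linear_adj: "bounded_linear (adj :: 'a::cstar_algebra \<Rightarrow> 'a)"
  by (rule bounded_linear_intro[where K=1]) (simp_all add: adj_add adj_scaleR)

lemma norm_sq_adj': "(norm (x::'a::cstar_algebra))^2 = norm (x * adj x)"
  by (metis adj_adj cstar_identity norm_adj)

lemma adj_eq_zero_iff: "adj x * x = 0 \<longleftrightarrow> (x::'a::cstar_algebra) = 0"
  by (metis cstar_identity norm_eq_zero power_not_zero zero_neq_numeral mult_zero_right norm_zero zero_power2)

lemma selfadj_sq_zero: "adj x = x \<Longrightarrow> x * x = 0 \<Longrightarrow> (x::'a::cstar_algebra) = 0"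
  by (metis adj_eq_zero_iff)

lemma selfadj_cube_zero:
  assumes "adj d = d" "d * d * d = (0::'a::cstar_algebra)"
  shows "d = 0"
proof -
  have "adj (d*d) = d*d" using assms by (simp add: adj_mult)
  moreover have "(d*d)*(d*d) = 0" using assms by (simp add: mult.assoc[symmetric])
  ultimately have "d*d = 0" by (rule selfadj_sq_zero)
  thus ?thesis by (rule selfadj_sq_zero[OF assms(1)])
qed

lemma cz_identity:
  fixes x y :: "'a::cstar_algebra"
  assumes "adj x = x" "adj y = y" "x * y = y * x"
  shows "adj (x + scaleC \<i> y) * (x + scaleC \<i> y) = x * x + y * y"
  using assms
  by (simp add: adj_add adj_ii algebra_simps scaleC_mult_left scaleC_mult_right scaleC_ii_ii scaleC_add_right scaleC_diff_right)

lemma adj_cz: "adj x = x \<Longrightarrow> adj y = y \<Longrightarrow> adj (x + scaleC \<i> y) = x - scaleC \<i> (y::'a::cstar_algebra)"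
  by (simp add: adj_add adj_ii)

lemma re_le:
  fixes x y :: "'a::cstar_algebra"
  assumes "adj x = x" "adj y = y"
  shows "norm x \<le> norm (x + scaleC \<i> y)"
proof -
  let ?z = "x + scaleC \<i> y"
  have "?z + adj ?z = 2 *\<^sub>R x" using assms by (simp add: adj_cz scaleR_2)
  hence "norm (2 *\<^sub>R x) \<le> norm ?z + norm (adj ?z)" by (metis norm_triangle_ineq)
  thus ?thesis by simp
qed

lemma im_le:
  fixes x y :: "'a::cstar_algebra"
  assumes "adj x = x" "adj y = y"
  shows "norm y \<le> norm (x + scaleC \<i> y)"
proof -
  have "scaleC (-\<i>) (x + scaleC \<i> y) = y + scaleC \<i> (- x)"
    by (simp add: scaleC_add_right scaleC_scaleC scaleC_minus_right scaleC_minus_left scaleC_one)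
  hence "norm (x + scaleC \<i> y) = norm (y + scaleC \<i> (- x))"
    by (metis norm_scaleC norm_minus_cancel norm_ii mult_1)
  moreover have "norm y \<le> norm (y + scaleC \<i> (- x))"
    using assms by (intro re_le) (simp_all add: adj_minus)
  ultimately show ?thesis by simp
qed

lemma W_lemma:
  fixes x y :: "'a::cstar_algebra"
  assumes "adj x = x" "adj y = y" "x * y = y * x"
  shows "(norm x)^2 \<le> norm (x * x + y * y)"
proof -
  let ?z = "x + scaleC \<i> y"
  have "norm x \<le> norm ?z" using assms by (intro re_le)
  hence "(norm x)^2 \<le> (norm ?z)^2" by (simp add: power_mono)
  also have "\<dots> = norm (adj ?z * ?z)" by (rule cstar_identity[symmetric])
  also have "\<dots> = norm (x * x + y * y)" using assms by (simp add: cz_identity)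
  finally show ?thesis .
qed

lemma W_lemma2:
  fixes x y :: "'a::cstar_algebra"
  assumes "adj x = x" "adj y = y" "x * y = y * x" "x * x + y * y = 0"
  shows "x = 0"
  using W_lemma[OF assms(1-3)] assms(4) by simp

lemma Z_lemma:
  fixes m k :: "'a::cstar_algebra"
  assumes "adj m = m" "adj k = k" "m * k = k * m"
  shows "norm (m * m - k * k) \<le> norm (m * m + k * k)"
proof -
  let ?z = "m + scaleC \<i> k"
  have e: "?z * ?z + adj ?z * adj ?z = 2 *\<^sub>R (m * m - k * k)"
    using assms by (simp add: adj_cz algebra_simps scaleC_mult_left scaleC_mult_right scaleC_ii_ii scaleR_2 scaleC_add_right scaleC_diff_right)
  have "norm (2 *\<^sub>R (m * m - k * k)) \<le> norm (?z * ?z) + norm (adj ?z * adj ?z)"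
    unfolding e[symmetric] by (rule norm_triangle_ineq)
  also have "\<dots> \<le> norm ?z * norm ?z + norm (adj ?z) * norm (adj ?z)"
    by (intro add_mono norm_mult_ineq)
  also have "\<dots> = 2 * (norm ?z)^2" by (simp add: power2_eq_square)
  also have "(norm ?z)^2 = norm (m * m + k * k)"
    using assms by (simp add: cstar_identity[symmetric] cz_identity)
  finally show ?thesis by simp
qed

section \<open>Invertibility\<close>

definition inv_ex :: "'a::cstar_algebra \<Rightarrow> bool" where
  "inv_ex x \<longleftrightarrow> (\<exists>g. x * g = 1 \<and> g * x = 1)"

lemma neumann:
  fixes x :: "'a::cstar_algebra"
  assumes "norm x < 1"
  shows "inv_ex (1 - x)"
proof -
  have sn: "summable (\<lambda>n. norm (x ^ n))"
    by (rule summable_comparison_test[where g="\<lambda>n. norm x ^ n"])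
       (auto intro: norm_power_ineq summable_geometric simp: assms)
  hence s: "summable (\<lambda>n. x ^ n)" by (rule summable_norm_cancel)
  have lim: "(\<lambda>n. x ^ n) \<longlonglongrightarrow> 0" using assms by (rule LIMSEQ_power_zero)
  have t: "(\<lambda>n. x ^ Suc n - x ^ n) sums (0 - x ^ 0)" by (rule telescope_sums[OF lim])
  have t1: "(\<lambda>n. (1 - x) * x ^ n) sums 1"
  proof -
    have "(\<lambda>n. - (x ^ Suc n - x ^ n)) sums (- (0 - x ^ 0))" by (rule sums_minus[OF t])
    thus ?thesis by (simp add: algebra_simps)
  qed
  have t2: "(\<lambda>n. x ^ n * (1 - x)) sums 1"
  proof -
    have "(\<lambda>n. - (x ^ Suc n - x ^ n)) sums (- (0 - x ^ 0))" by (rule sums_minus[OF t])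
    thus ?thesis by (simp add: algebra_simps power_commutes)
  qed
  have "(1 - x) * suminf (\<lambda>n. x ^ n) = 1"
    using suminf_mult[OF s, of "1 - x"] t1 by (simp add: sums_iff)
  moreover have "suminf (\<lambda>n. x ^ n) * (1 - x) = 1"
    using suminf_mult2[OF s, of "1 - x"] t2 by (simp add: sums_iff)
  ultimately show ?thesis unfolding inv_ex_def by blast
qed

lemma inv_commute:
  fixes z w g :: "'a::cstar_algebra"
  assumes "w * g = 1" "g * w = 1" "z * w = w * z"
  shows "z * g = g * z"
proof -
  have "g * z = g * z * (w * g)" using assms by simp
  also have "\<dots> = g * (z * w) * g" by (simp add: mult.assoc)
  also have "\<dots> = g * (w * z) * g" using assms by simp
  also have "\<dots> = (g * w) * z * g" by (simp add: mult.assoc)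
  finally show ?thesis using assms by simp
qed

lemma inv_selfadj:
  fixes w g :: "'a::cstar_algebra"
  assumes "w * g = 1" "g * w = 1" "adj w = w"
  shows "adj g = g"
proof -
  have "adj g * w = 1" using assms(1) by (metis adj_mult adj_one assms(3))
  hence "adj g * w * g = g" by simp
  thus ?thesis using assms(1) by (simp add: mult.assoc)
qed

section \<open>Positivity\<close>

definition posn :: "'a::cstar_algebra \<Rightarrow> bool" where
  "posn a \<longleftrightarrow> adj a = a \<and> (\<exists>t>0. norm (of_real t - a) \<le> t)"

lemma posn_selfadj: "posn a \<Longrightarrow> adj a = a"
  by (simp add: posn_def)

lemma posn_zero [simp]: "posn (0::'a::cstar_algebra)"
  unfolding posn_def by (rule conjI, simp, rule exI[where x=1], simp)

lemma posn_add:
  assumes "posn a" "posn (b::'a::cstar_algebra)"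
  shows "posn (a + b)"
proof -
  obtain s where s: "s > 0" "norm (of_real s - a) \<le> s" using assms(1) posn_def by blast
  obtain t where t: "t > 0" "norm (of_real t - b) \<le> t" using assms(2) posn_def by blast
  have "norm (of_real (s + t) - (a + b)) = norm ((of_real s - a) + (of_real t - b))"
    by (simp add: algebra_simps)
  also have "\<dots> \<le> s + t" using s t by (meson add_mono norm_triangle_le)
  finally show ?thesis using assms s t unfolding posn_def by (auto simp: adj_add intro!: exI[where x="s+t"])
qed

lemma posn_scaleR:
  assumes "posn a" "r \<ge> 0"
  shows "posn (r *\<^sub>R (a::'a::cstar_algebra))"
proof (cases "r = 0")
  case True then show ?thesis by simp
next
  case False
  hence r: "r > 0" using assms by simp
  obtain s where s: "s > 0" "norm (of_real s - a) \<le> s" using assms(1) posn_def by blast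
  have "of_real (r * s) - r *\<^sub>R a = r *\<^sub>R (of_real s - a)"
    by (simp add: of_real_def scaleR_diff_right)
  hence "norm (of_real (r * s) - r *\<^sub>R a) = r * norm (of_real s - a)"
    using r by simp
  also have "\<dots> \<le> r * s" using s r by simp
  finally show ?thesis using assms r s unfolding posn_def
    by (auto simp: adj_scaleR intro!: exI[where x="r*s"])
qed

lemma posn_of_real:
  assumes "r \<ge> 0"
  shows "posn (of_real r :: 'a::cstar_algebra)"
  unfolding posn_def using assms
  by (auto intro!: exI[where x="r+1"] simp: of_real_def scaleR_diff_left[symmetric] adj_scaleR)

lemma posn_bound_minus:
  assumes "adj x = (x::'a::cstar_algebra)"
  shows "posn (of_real (norm x) - x)"
proof -
  have "norm (of_real (norm x + 1) - (of_real (norm x) - x)) = norm (1 + x)"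
    by (simp add: algebra_simps)
  also have "\<dots> \<le> 1 + norm x" by (metis norm_one norm_triangle_ineq)
  finally show ?thesis unfolding posn_def using assms
    by (auto simp: adj_diff intro!: exI[where x="norm x + 1"] add_nonneg_pos)
qed

lemma posn_bound_plus:
  assumes "adj x = (x::'a::cstar_algebra)"
  shows "posn (of_real (norm x) + x)"
proof -
  have "norm (of_real (norm x + 1) - (of_real (norm x) + x)) = norm (1 - x)"
    by (simp add: algebra_simps)
  also have "\<dots> \<le> 1 + norm x" by (metis norm_one norm_triangle_ineq4)
  finally show ?thesis unfolding posn_def using assms
    by (auto simp: adj_add intro!: exI[where x="norm x + 1"] add_nonneg_pos)
qed

lemma posn_one_plus_inv:
  assumes "posn (c::'a::cstar_algebra)"
  shows "inv_ex (1 + c)"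
proof -
  obtain t where t: "t > 0" "norm (of_real t - c) \<le> t" using assms posn_def by blast
  define x where "x = (1 / (1 + t)) *\<^sub>R (of_real t - c)"
  have "norm x = norm (of_real t - c) / (1 + t)" using t by (simp add: x_def)
  also have "\<dots> \<le> t / (1 + t)" using t by (simp add: divide_right_mono)
  also have "\<dots> < 1" using t by simp
  finally have "inv_ex (1 - x)" by (rule neumann)
  then obtain g where g: "(1 - x) * g = 1" "g * (1 - x) = 1" unfolding inv_ex_def by blast
  have tt: "(t + t*t)/(1+t) = t" using t by (simp add: field_simps)
  have e: "1 + c = (1 + t) *\<^sub>R (1 - x)"
    using t tt by (simp add: x_def scaleR_diff_right of_real_def algebra_simps)
  show ?thesis unfolding inv_ex_def
    by (rule exI[where x="(1 / (1 + t)) *\<^sub>R g"]) (use g t in \<open>simp add: e\<close>)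
qed

lemma commute_power:
  fixes z y :: "'a::cstar_algebra"
  assumes "z * y = y * z"
  shows "z * y ^ n = y ^ n * z"
proof (induction n)
  case 0 then show ?case by simp
next
  case (Suc n)
  have "z * y ^ Suc n = (z * y) * y ^ n" by (simp add: mult.assoc)
  also have "\<dots> = y * (z * y ^ n)" using assms by (simp add: mult.assoc)
  also have "\<dots> = y ^ Suc n * z" using Suc by (simp add: mult.assoc)
  finally show ?case .
qed

lemma root_ex:
  fixes a :: "'a::cstar_algebra"
  assumes "posn a"
  shows "\<exists>k. posn k \<and> k * k = a \<and> (\<forall>z. z * a = a * z \<longrightarrow> z * k = k * z)"
proof -
  obtain t where t: "t > 0" "norm (of_real t - a) \<le> t" using assms posn_def by blast
  have aa: "adj a = a" using assms posn_def by blast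
  define y where "y = (1 / t) *\<^sub>R (of_real t - a)"
  have ny: "norm y \<le> 1" using t by (simp add: y_def divide_le_eq_1)
  have ay: "adj y = y" using aa by (simp add: y_def adj_scaleR adj_diff)
  define f where "f n = cf n *\<^sub>R y ^ n" for n
  have nf: "norm (f n) \<le> \<bar>cf n\<bar>" for n
  proof -
    have "norm (y ^ n) \<le> norm y ^ n" by (rule norm_power_ineq)
    also have "\<dots> \<le> 1" using ny by (simp add: power_le_one)
    finally show ?thesis by (simp add: f_def mult_left_le)
  qed
  have sn: "summable (\<lambda>n. norm (f n))"
    by (rule summable_comparison_test[OF _ summable_cf]) (use nf in auto)
  have s: "summable f" using sn by (rule summable_norm_cancel)
  define S where "S = suminf f"
  have SS: "S * S = 1 - y"
  proof -
    have "S * S = (\<Sum>n. \<Sum>i\<le>n. f i * f (n - i))"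
      unfolding S_def by (rule Cauchy_product[OF sn sn])
    also have "\<dots> = (\<Sum>n. (if n = 0 then 1 else if n = 1 then -1 else 0) *\<^sub>R y ^ n)"
    proof -
      have "(\<Sum>i\<le>n. f i * f (n - i)) = (\<Sum>i\<le>n. cf i * cf (n - i)) *\<^sub>R y ^ n" for n
      proof -
        have "(\<Sum>i\<le>n. f i * f (n - i)) = (\<Sum>i\<le>n. (cf i * cf (n - i)) *\<^sub>R y ^ n)"
        proof (rule sum.cong)
          fix i assume "i \<in> {..n}"
          hence "y ^ i * y ^ (n - i) = y ^ n" by (simp add: power_add[symmetric])
          thus "f i * f (n - i) = (cf i * cf (n - i)) *\<^sub>R y ^ n" by (simp add: f_def)
        qed simp
        thus ?thesis by (simp add: scaleR_sum_left)
      qed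
      thus ?thesis by (simp add: cf_conv)
    qed
    also have "\<dots> = (\<Sum>n\<in>{0,1}. (if n = 0 then 1 else if n = 1 then -1 else 0) *\<^sub>R y ^ n)"
      by (rule suminf_finite) auto
    also have "\<dots> = 1 - y" by simp
    finally show ?thesis .
  qed
  have aS: "adj S = S"
  proof -
    have "adj S = (\<Sum>n. adj (f n))" unfolding S_def by (rule bounded_linear.suminf[OF bounded_linear_adj s])
    also have "\<dots> = S" unfolding S_def by (rule arg_cong[where f=suminf]) (simp add: fun_eq_iff f_def adj_scaleR adj_power ay)
    finally show ?thesis .
  qed
  have comm: "z * S = S * z" if "z * a = a * z" for z
  proof -
    have "z * y = y * z" using that by (simp add: y_def algebra_simps of_real_def)
    hence "z * y ^ n = y ^ n * z" for n by (rule commute_power)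
    hence "z * f n = f n * z" for n by (simp add: f_def)
    hence "(\<Sum>n. z * f n) = (\<Sum>n. f n * z)" by simp
    thus ?thesis unfolding S_def using suminf_mult[OF s, of z] suminf_mult2[OF s, of z] by simp
  qed
  have f0: "f 0 = 1" by (simp add: f_def)
  have n1S: "norm (1 - S) \<le> 1"
  proof -
    have sn': "summable (\<lambda>n. norm (f (Suc n)))" using sn summable_Suc_iff[of "\<lambda>n. norm (f n)"] by blast
    have "(\<Sum>n. f (Suc n)) = S - 1" unfolding S_def using suminf_split_head[OF s] f0 by simp
    hence "norm (1 - S) = norm (\<Sum>n. f (Suc n))" by (simp add: norm_minus_commute)
    also have "\<dots> \<le> (\<Sum>n. norm (f (Suc n)))" by (rule summable_norm[OF sn'])
    also have "\<dots> \<le> (\<Sum>n. \<bar>cf (Suc n)\<bar>)" by (rule suminf_le[OF _ sn' summable_cf_tail]) (rule nf)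
    also have "\<dots> \<le> 1" by (rule suminf_cf_tail)
    finally show ?thesis .
  qed
  define k where "k = sqrt t *\<^sub>R S"
  have kk: "k * k = a"
  proof -
    have "k * k = (sqrt t * sqrt t) *\<^sub>R (S * S)" by (simp add: k_def)
    also have "\<dots> = t *\<^sub>R (1 - y)" using t SS by simp
    also have "\<dots> = a" using t by (simp add: y_def scaleR_diff_right of_real_def)
    finally show ?thesis .
  qed
  have pk: "posn k"
  proof -
    have "of_real (sqrt t) - k = sqrt t *\<^sub>R (1 - S)" by (simp add: k_def of_real_def scaleR_diff_right)
    hence "norm (of_real (sqrt t) - k) = sqrt t * norm (1 - S)" using t by simp
    also have "\<dots> \<le> sqrt t" using n1S t by (simp add: mult_left_le)
    finally have "norm (of_real (sqrt t) - k) \<le> sqrt t" .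
    moreover have "adj k = k" using aS by (simp add: k_def adj_scaleR)
    moreover have "sqrt t > 0" using t by simp
    ultimately show ?thesis unfolding posn_def by blast
  qed
  have commk: "z * k = k * z" if "z * a = a * z" for z
    using comm[OF that] by (simp add: k_def)
  show ?thesis using pk kk commk by blast
qed

lemma of_real_comm: "x * of_real r = of_real r * (x::'a::cstar_algebra)"
  by (simp add: of_real_def)

lemma posn_sq:
  fixes h :: "'a::cstar_algebra"
  assumes ah: "adj h = h"
  shows "posn (h * h)"
proof (cases "h = 0")
  case True then show ?thesis by simp
next
  case False
  define \<mu> where "\<mu> = norm h"
  have mu: "\<mu> > 0" using False by (simp add: \<mu>_def)
  define h' where "h' = (1 / \<mu>) *\<^sub>R h"
  have nh': "norm h' = 1" using mu by (simp add: h'_def \<mu>_def)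
  have ah': "adj h' = h'" using ah by (simp add: h'_def adj_scaleR)
  define c where "c = 1 - h' * h'"
  have pc: "posn c"
  proof -
    have "norm (of_real 1 - c) = norm (h' * h')" by (simp add: c_def)
    also have "\<dots> \<le> norm h' * norm h'" by (rule norm_mult_ineq)
    finally have "norm (of_real 1 - c) \<le> 1" using nh' by simp
    moreover have "adj c = c" using ah' by (simp add: c_def adj_diff adj_mult)
    ultimately show ?thesis unfolding posn_def by (auto intro!: exI[where x=1])
  qed
  obtain w where w: "posn w" "w * w = c" "\<And>z. z * c = c * z \<Longrightarrow> z * w = w * z"
    using root_ex[OF pc] by blast
  have "h' * c = c * h'" by (simp add: c_def algebra_simps mult.assoc)
  hence hw: "h' * w = w * h'" by (rule w(3))
  have aw: "adj w = w" using w(1) posn_def by blast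
  let ?z = "h' + scaleC \<i> w"
  have "adj ?z * ?z = 1" using cz_identity[OF ah' aw hw] w(2) by (simp add: c_def)
  hence "(norm ?z)^2 = 1" by (metis cstar_identity norm_one)
  hence nz: "norm ?z = 1" using norm_ge_zero[of ?z] by (auto simp: power2_eq_1_iff)
  have nw: "norm w \<le> 1" using im_le[OF ah' aw] nz by simp
  have "norm (of_real 1 - h' * h') = norm (w * w)" using w(2) by (simp add: c_def)
  also have "\<dots> \<le> norm w * norm w" by (rule norm_mult_ineq)
  also have "\<dots> \<le> 1" using nw by (simp add: mult_le_one)
  finally have p1: "posn (h' * h')" unfolding posn_def using ah'
    by (auto simp: adj_mult intro!: exI[where x=1])
  have "h * h = (\<mu> * \<mu>) *\<^sub>R (h' * h')" using mu by (simp add: h'_def)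
  thus ?thesis using posn_scaleR[OF p1, of "\<mu> * \<mu>"] by simp
qed

lemma posn_bound:
  fixes x :: "'a::cstar_algebra"
  assumes "M \<ge> 0" "adj x = x" "posn (of_real M - x)" "posn (of_real M + x)"
  shows "norm x \<le> M"
proof -
  obtain k where k: "posn k" "k * k = of_real M - x" "\<And>z. z * (of_real M - x) = (of_real M - x) * z \<Longrightarrow> z * k = k * z"
    using root_ex[OF assms(3)] by blast
  obtain m where m: "posn m" "m * m = of_real M + x" "\<And>z. z * (of_real M + x) = (of_real M + x) * z \<Longrightarrow> z * m = m * z"
    using root_ex[OF assms(4)] by blast
  have "m * (m * m) = (m * m) * m" by (simp add: mult.assoc)
  hence "m * (of_real M + x) = (of_real M + x) * m" using m(2) by simp
  hence "m * x = x * m" by (simp add: algebra_simps of_real_comm)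
  hence "m * (of_real M - x) = (of_real M - x) * m" by (simp add: algebra_simps of_real_comm)
  hence mk: "m * k = k * m" by (rule k(3))
  have ak: "adj k = k" and am: "adj m = m" using k(1) m(1) posn_def by blast+
  have n1: "norm (m * m - k * k) \<le> norm (m * m + k * k)" by (rule Z_lemma[OF am ak mk])
  have e1: "m * m - k * k = 2 *\<^sub>R x" using k(2) m(2) by (simp add: scaleR_2)
  have e2: "m * m + k * k = of_real (2 * M)" using k(2) m(2) by (simp add: of_real_add[symmetric] del: of_real_add)
  have "norm (2 *\<^sub>R x) \<le> norm (of_real (2 * M) :: 'a)" using n1 by (simp only: e1 e2)
  hence "\<bar>2\<bar> * norm x \<le> \<bar>2 * M\<bar>" by (simp only: norm_scaleR norm_of_real)
  thus ?thesis using assms(1) by simp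
qed

lemma jacobson:
  fixes a b :: "'a::cstar_algebra"
  assumes "inv_ex (1 - a * b)"
  shows "inv_ex (1 - b * a)"
proof -
  obtain g where g: "(1 - a * b) * g = 1" "g * (1 - a * b) = 1" using assms inv_ex_def by blast
  have g1: "a * b * g = g - 1" using g(1) by (simp add: algebra_simps)
  have g2: "g * a * b = g - 1" using g(2) by (simp add: algebra_simps mult.assoc)
  have "(1 - b * a) * (1 + b * g * a) = 1 + b * g * a - b * a - b * (a * b * g) * a"
    by (simp add: algebra_simps mult.assoc)
  also have "b * (a * b * g) * a = b * g * a - b * a" by (simp only: g1) (simp add: algebra_simps)
  hence "1 + b * g * a - b * a - b * (a * b * g) * a = 1" by simp
  finally have e1: "(1 - b * a) * (1 + b * g * a) = 1" .
  have "(1 + b * g * a) * (1 - b * a) = 1 + b * g * a - b * a - b * (g * a * b) * a"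
    by (simp add: algebra_simps mult.assoc)
  also have "b * (g * a * b) * a = b * g * a - b * a" by (simp only: g2) (simp add: algebra_simps)
  hence "1 + b * g * a - b * a - b * (g * a * b) * a = 1" by simp
  finally have e2: "(1 + b * g * a) * (1 - b * a) = 1" .
  show ?thesis unfolding inv_ex_def using e1 e2 by blast
qed

lemma sstar:
  fixes p :: "'a::cstar_algebra"
  assumes pp: "posn p" and np: "norm p \<le> 1" and ip: "inv_ex (1 - p)"
  shows "norm p < 1"
proof -
  define c where "c = 1 - p"
  have ap: "adj p = p" using pp posn_def by blast
  have ac: "adj c = c" using ap by (simp add: c_def adj_diff)
  have pc: "posn c"
  proof -
    have "norm (of_real 1 - c) \<le> 1" using np by (simp add: c_def)
    thus ?thesis unfolding posn_def using ac by (auto intro!: exI[where x=1])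
  qed
  have nc: "norm c \<le> 1"
  proof (rule posn_bound[OF _ ac])
    show "posn (of_real 1 - c)" using pp by (simp add: c_def)
    show "posn (of_real 1 + c)" using posn_add[OF posn_of_real[of 1] pc] by simp
  qed simp
  obtain g where g: "c * g = 1" "g * c = 1" using ip inv_ex_def c_def by blast
  have ag: "adj g = g" by (rule inv_selfadj[OF g ac])
  define M where "M = norm g"
  have M1: "M \<ge> 1"
  proof -
    have "1 = norm (c * g)" using g by simp
    also have "\<dots> \<le> norm c * norm g" by (rule norm_mult_ineq)
    also have "\<dots> \<le> 1 * norm g" using nc by (intro mult_right_mono) simp_all
    finally show ?thesis by (simp add: M_def)
  qed
  obtain kc where kc: "posn kc" "kc * kc = c" "\<And>z. z * c = c * z \<Longrightarrow> z * kc = kc * z"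
    using root_ex[OF pc] by blast
  have pMg: "posn (of_real M - g)" unfolding M_def by (rule posn_bound_minus[OF ag])
  obtain m where m: "posn m" "m * m = of_real M - g" "\<And>z. z * (of_real M - g) = (of_real M - g) * z \<Longrightarrow> z * m = m * z"
    using root_ex[OF pMg] by blast
  have "c * (of_real M - g) = (of_real M - g) * c" using g by (simp add: algebra_simps of_real_comm)
  hence cm: "c * m = m * c" by (rule m(3))
  have mk: "m * kc = kc * m" using cm[symmetric] by (rule kc(3))
  have akc: "adj kc = kc" and am: "adj m = m" using kc(1) m(1) posn_def by blast+
  define x where "x = kc * m"
  have ax: "adj x = x" using akc am mk by (simp add: x_def adj_mult)
  have "x * x = kc * (m * kc) * m" by (simp add: x_def mult.assoc)
  also have "\<dots> = (kc * kc) * (m * m)" using mk by (simp add: mult.assoc)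
  also have "\<dots> = c * (of_real M - g)" using kc(2) m(2) by simp
  also have "\<dots> = M *\<^sub>R c - 1" using g by (simp add: algebra_simps of_real_comm of_real_def)
  finally have xx: "x * x = M *\<^sub>R c - 1" .
  have pe: "posn ((1 / M) *\<^sub>R (x * x))" using posn_scaleR[OF posn_sq[OF ax], of "1/M"] M1 by simp
  have e: "(1 / M) *\<^sub>R (x * x) = of_real (1 - 1 / M) - p"
    using M1 by (simp add: xx scaleR_diff_right c_def of_real_def algebra_simps)
  define s where "s = 1 - 1 / M"
  have s0: "s \<ge> 0" using M1 by (simp add: s_def)
  have "norm p \<le> s"
  proof (rule posn_bound[OF s0 ap])
    show "posn (of_real s - p)" using pe e by (simp add: s_def)
    show "posn (of_real s + p)" by (rule posn_add[OF posn_of_real[OF s0] pp])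
  qed
  also have "s < 1" using M1 by (simp add: s_def)
  finally show ?thesis .
qed

lemma L_lemma:
  fixes y :: "'a::cstar_algebra"
  assumes p1: "posn (y * adj y)" and p2: "posn (- (adj y * y))"
  shows "y = 0"
proof (rule ccontr)
  assume y0: "y \<noteq> 0"
  define \<nu> where "\<nu> = norm y"
  have nu: "\<nu> > 0" using y0 by (simp add: \<nu>_def)
  define y' where "y' = (1 / \<nu>) *\<^sub>R y"
  have ny': "norm y' = 1" using nu by (simp add: y'_def \<nu>_def)
  have e1: "y' * adj y' = (1 / (\<nu> * \<nu>)) *\<^sub>R (y * adj y)" by (simp add: y'_def adj_scaleR)
  have e2: "- (adj y' * y') = (1 / (\<nu> * \<nu>)) *\<^sub>R (- (adj y * y))" by (simp add: y'_def adj_scaleR)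
  have pp: "posn (y' * adj y')" unfolding e1 by (rule posn_scaleR[OF p1]) (use nu in simp)
  have pq: "posn (- (adj y' * y'))" unfolding e2 by (rule posn_scaleR[OF p2]) (use nu in simp)
  have np: "norm (y' * adj y') = 1" using ny' norm_sq_adj'[of y'] by simp
  have "inv_ex (1 + - (adj y' * y'))" by (rule posn_one_plus_inv[OF pq])
  hence "inv_ex (1 - adj y' * y')" by simp
  hence "inv_ex (1 - y' * adj y')" by (rule jacobson)
  hence "norm (y' * adj y') < 1" using sstar[OF pp] np by simp
  thus False using np by simp
qed

lemma selfadj_decomp:
  fixes y :: "'a::cstar_algebra"
  shows "\<exists>h k. adj h = h \<and> adj k = k \<and> y = h + scaleC \<i> k"
proof -
  define h where "h = (1/2::real) *\<^sub>R (y + adj y)"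
  define k where "k = scaleC (- \<i> / 2) (y - adj y)"
  have "adj h = h" by (simp add: h_def adj_scaleR adj_add adj_adj add.commute)
  moreover have "adj k = k"
  proof -
    have "adj k = scaleC (\<i> / 2) (adj y - y)" by (simp add: k_def adj_scaleC adj_diff adj_adj)
    also have "\<dots> = k" unfolding k_def
      by (metis minus_diff_eq scaleC_minus_right scaleC_minus_left minus_divide_left)
    finally show ?thesis .
  qed
  moreover have "y = h + scaleC \<i> k"
  proof -
    have "scaleC \<i> k = scaleC (1/2) (y - adj y)" by (simp add: k_def scaleC_scaleC)
    also have "\<dots> = (1/2::real) *\<^sub>R (y - adj y)" using scaleC_of_real[of "1/2" "y - adj y"] by simp
    finally have "h + scaleC \<i> k = (1/2::real) *\<^sub>R (y + adj y) + (1/2::real) *\<^sub>R (y - adj y)" by (simp add: h_def)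
    also have "\<dots> = (1/2::real) *\<^sub>R y + (1/2::real) *\<^sub>R y" by (simp add: scaleR_add_right scaleR_diff_right)
    also have "\<dots> = y" by (simp add: scaleR_add_left[symmetric])
    finally show ?thesis by simp
  qed
  ultimately show ?thesis by blast
qed

lemma sum_yy:
  fixes h k :: "'a::cstar_algebra"
  assumes "adj h = h" "adj k = k"
  shows "(h + scaleC \<i> k) * adj (h + scaleC \<i> k) + adj (h + scaleC \<i> k) * (h + scaleC \<i> k) = 2 *\<^sub>R (h * h) + 2 *\<^sub>R (k * k)"
  using assms by (simp add: adj_cz algebra_simps scaleC_mult_left scaleC_mult_right scaleC_ii_ii scaleR_2 scaleC_add_right scaleC_diff_right)

lemma posn_yy:
  fixes y :: "'a::cstar_algebra"
  assumes "posn (- (adj y * y))"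
  shows "posn (y * adj y)"
proof -
  obtain h k where hk: "adj h = h" "adj k = k" "y = h + scaleC \<i> k" using selfadj_decomp by blast
  have eq: "y * adj y = 2 *\<^sub>R (h * h) + 2 *\<^sub>R (k * k) + (- (adj y * y))"
    using sum_yy[OF hk(1,2)] hk(3) by (simp add: algebra_simps)
  show ?thesis unfolding eq
    by (intro posn_add posn_scaleR assms posn_sq hk(1,2)) simp_all
qed

theorem posn_adj_mult:
  fixes b :: "'a::cstar_algebra"
  shows "posn (adj b * b)"
proof -
  define a where "a = adj b * b"
  have aa: "adj a = a" by (simp add: a_def adj_mult adj_adj)
  obtain A where A: "posn A" "A * A = a * a" "\<And>z. z * (a * a) = (a * a) * z \<Longrightarrow> z * A = A * z"
    using root_ex[OF posn_sq[OF aa]] by blast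
  have aA: "a * A = A * a" by (rule A(3)) (simp add: mult.assoc)
  have AA: "adj A = A" using A(1) posn_def by blast
  obtain kA where kA: "posn kA" "kA * kA = A" "\<And>z. z * A = A * z \<Longrightarrow> z * kA = kA * z"
    using root_ex[OF A(1)] by blast
  have akA: "adj kA = kA" using kA(1) posn_def by blast
  define u where "u = A - a"
  have au: "adj u = u" using aa AA by (simp add: u_def adj_diff)
  have uA: "u * A = A * u" using aA by (simp add: u_def algebra_simps)
  have "u * (A + a) = A * A - a * a + (A * a - a * A)" by (simp add: u_def algebra_simps)
  hence uApa: "u * (A + a) = 0" using A(2) aA by simp
  hence ua: "u * a = - (u * A)" by (simp add: distrib_left add_eq_0_iff)
  have "u * a = u * A - u * u" by (simp add: u_def algebra_simps)
  hence uu: "u * u = 2 *\<^sub>R (u * A)" using ua by (simp add: algebra_simps scaleR_2)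
  have ukA: "u * kA = kA * u" by (rule kA(3)[OF uA])
  define x where "x = kA * u"
  have ax: "adj x = x" using akA au ukA by (simp add: x_def adj_mult)
  define y where "y = b * u"
  have "adj y * y = u * a * u" using au by (simp add: y_def a_def adj_mult mult.assoc)
  also have "\<dots> = - (u * A * u)" using ua by simp
  also have "u * A * u = x * x"
  proof -
    have "x * x = kA * (u * kA) * u" by (simp add: x_def mult.assoc)
    also have "\<dots> = (kA * kA) * u * u" using ukA by (simp add: mult.assoc)
    also have "\<dots> = u * A * u" using kA(2) uA by (simp add: mult.assoc)
    finally show ?thesis by simp
  qed
  finally have yy: "- (adj y * y) = x * x" by simp
  have p2: "posn (- (adj y * y))" unfolding yy by (rule posn_sq[OF ax])
  have "y = 0" by (rule L_lemma[OF posn_yy[OF p2] p2])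
  hence "x * x = 0" using yy by simp
  hence "x = 0" by (rule selfadj_sq_zero[OF ax, rotated])
  hence "kA * u = 0" by (simp add: x_def)
  hence "A * u = 0" using kA(2) by (metis mult.assoc mult_zero_right)
  hence "u * u = 0" using uu uA by simp
  hence "u = 0" by (rule selfadj_sq_zero[OF au, rotated])
  hence "a = A" by (simp add: u_def)
  thus ?thesis using A(1) by (simp add: a_def)
qed

lemma posn_unique_comm:
  fixes r k :: "'a::cstar_algebra"
  assumes pr: "posn r" and pk: "posn k" and rk: "r * k = k * r" and sq: "r * r = k * k"
  shows "r = k"
proof -
  define d where "d = r - k"
  have ar: "adj r = r" and ak: "adj k = k" using pr pk posn_def by blast+
  have ad: "adj d = d" using ar ak by (simp add: d_def adj_diff)
  have dr: "d * r = r * d" using rk by (simp add: d_def algebra_simps)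
  have dk: "d * k = k * d" using rk by (simp add: d_def algebra_simps)
  obtain r' where r': "posn r'" "r' * r' = r" "\<And>z. z * r = r * z \<Longrightarrow> z * r' = r' * z"
    using root_ex[OF pr] by blast
  obtain k' where k': "posn k'" "k' * k' = k" "\<And>z. z * k = k * z \<Longrightarrow> z * k' = k' * z"
    using root_ex[OF pk] by blast
  have ar': "adj r' = r'" and ak': "adj k' = k'" using r'(1) k'(1) posn_def by blast+
  have dr': "d * r' = r' * d" by (rule r'(3)[OF dr])
  have dk': "d * k' = k' * d" by (rule k'(3)[OF dk])
  have kr': "k * r' = r' * k" by (rule r'(3)) (use rk in simp)
  have rk': "r' * k' = k' * r'" by (rule k'(3)[OF kr'[symmetric]])
  define x where "x = r' * d"
  define z where "z = k' * d"
  have ax: "adj x = x" using ar' ad dr' by (simp add: x_def adj_mult)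
  have az: "adj z = z" using ak' ad dk' by (simp add: z_def adj_mult)
  have xz: "x * z = z * x"
  proof -
    have "x * z = r' * (d * k') * d" by (simp add: x_def z_def mult.assoc)
    also have "\<dots> = (r' * k') * (d * d)" using dk' by (simp add: mult.assoc)
    also have "\<dots> = k' * (r' * d) * d" using rk' by (simp add: mult.assoc)
    also have "\<dots> = k' * (d * r') * d" using dr' by simp
    also have "\<dots> = z * x" by (simp add: x_def z_def mult.assoc)
    finally show ?thesis .
  qed
  have xx: "x * x = r * (d * d)"
  proof -
    have "x * x = r' * (d * r') * d" by (simp add: x_def mult.assoc)
    also have "\<dots> = (r' * r') * (d * d)" using dr' by (simp add: mult.assoc)
    finally show ?thesis using r'(2) by simp
  qed
  have zz: "z * z = k * (d * d)"
  proof -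
    have "z * z = k' * (d * k') * d" by (simp add: z_def mult.assoc)
    also have "\<dots> = (k' * k') * (d * d)" using dk' by (simp add: mult.assoc)
    finally show ?thesis using k'(2) by simp
  qed
  have "(r + k) * d = 0" using sq rk by (simp add: d_def algebra_simps)
  hence s0: "x * x + z * z = 0" unfolding xx zz by (simp add: distrib_right[symmetric] mult.assoc[symmetric])
  have x0: "x = 0" by (rule W_lemma2[OF ax az xz s0])
  have z0: "z = 0" by (rule W_lemma2[OF az ax xz[symmetric]]) (use s0 in \<open>simp add: add.commute\<close>)
  have "r * (d * d) = 0" using xx x0 by simp
  moreover have "k * (d * d) = 0" using zz z0 by simp
  ultimately have "(r - k) * (d * d) = 0" by (simp add: algebra_simps)
  hence "d * d * d = 0" by (simp add: d_def mult.assoc)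
  hence "d = 0" by (rule selfadj_cube_zero[OF ad])
  thus ?thesis by (simp add: d_def)
qed

lemma positive_posn: "positive a \<Longrightarrow> posn (a::'a::cstar_algebra)"
  unfolding positive_def using posn_adj_mult by blast

lemma posn_positive: "posn a \<Longrightarrow> positive (a::'a::cstar_algebra)"
proof -
  assume "posn a"
  then obtain k where k: "posn k" "k * k = a" using root_ex by blast
  have "adj k = k" using k(1) posn_def by blast
  thus ?thesis unfolding positive_def using k(2) by metis
qed

lemma posn_unique:
  fixes r s :: "'a::cstar_algebra"
  assumes "posn r" "posn s" "r * r = s * s"
  shows "r = s"
proof -
  have ar: "adj r = r" using assms(1) posn_def by blast
  obtain K where K: "posn K" "K * K = r * r" "\<And>z. z * (r * r) = (r * r) * z \<Longrightarrow> z * K = K * z"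
    using root_ex[OF posn_sq[OF ar]] by blast
  have "r * K = K * r" by (rule K(3)) (simp add: mult.assoc)
  hence "r = K" using assms(1) K(1) K(2) posn_unique_comm by metis
  moreover have "s * K = K * s" by (rule K(3)) (simp add: assms(3) mult.assoc)
  hence "s = K" using assms(2) K(1) K(2) assms(3) posn_unique_comm by metis
  ultimately show ?thesis by simp
qed

lemma csqrt_eq:
  fixes r a :: "'a::cstar_algebra"
  assumes "positive r" "r * r = a"
  shows "csqrt a = r"
  unfolding csqrt_def
proof (rule the_equality)
  show "positive r \<and> r * r = a" using assms by simp
  fix r' assume "positive r' \<and> r' * r' = a"
  thus "r' = r" using assms posn_unique positive_posn by metis
qed

lemma mp_unique:
  fixes t X Y :: "'a::cstar_algebra"
  assumes X: "t * X * t = t" "X * t * X = X" "adj (t * X) = t * X" "adj (X * t) = X * t"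
    and Y: "t * Y * t = t" "Y * t * Y = Y" "adj (t * Y) = t * Y" "adj (Y * t) = Y * t"
  shows "X = Y"
proof -
  have tX: "t * X = t * Y * (t * X)" using X(1) Y(1) by (metis mult.assoc)
  have "t * Y * (t * X) = adj (t * Y) * adj (t * X)" using X(3) Y(3) by simp
  also have "\<dots> = adj (t * X * (t * Y))" by (simp add: adj_mult)
  also have "t * X * (t * Y) = t * Y" using X(1) by (metis mult.assoc)
  finally have e1: "t * X = t * Y" using tX Y(3) by simp
  have Xt: "X * t = (X * t) * (Y * t)" using Y(1) by (metis mult.assoc)
  have "(X * t) * (Y * t) = adj (X * t) * adj (Y * t)" using X(4) Y(4) by simp
  also have "\<dots> = adj ((Y * t) * (X * t))" by (simp add: adj_mult)
  also have "(Y * t) * (X * t) = Y * t" using X(1) by (metis mult.assoc)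
  finally have e2: "X * t = Y * t" using Xt Y(4) by simp
  have "X = X * t * X" using X(2) by simp
  also have "\<dots> = Y * t * X" using e2 by simp
  also have "\<dots> = Y * (t * X)" by (simp add: mult.assoc)
  also have "\<dots> = Y * (t * Y)" using e1 by simp
  also have "\<dots> = Y" using Y(2) by (simp add: mult.assoc)
  finally show ?thesis .
qed

lemma mp_inv_eq:
  fixes t X :: "'a::cstar_algebra"
  assumes "t * X * t = t" "X * t * X = X" "adj (t * X) = t * X" "adj (X * t) = X * t"
  shows "mp_inv t = X"
  unfolding mp_inv_def
  by (rule the_equality) (use assms mp_unique in blast)+

lemma ainv_eq:
  fixes x y :: "'a::cstar_algebra"
  assumes "x * y = 1" "y * x = 1"
  shows "ainv x = y"
  unfolding ainv_def
proof (rule the_equality)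
  show "x * y = 1 \<and> y * x = 1" using assms by simp
  fix y' assume "x * y' = 1 \<and> y' * x = 1"
  hence "y' = y' * (x * y)" using assms by simp
  also have "\<dots> = y" using \<open>x * y' = 1 \<and> y' * x = 1\<close> by (simp add: mult.assoc[symmetric])
  finally show "y' = y" .
qed

lemma conj_mult:
  fixes U Z1 Z2 :: "'a::cstar_algebra"
  assumes UP: "U * (adj U * U) = U" and c: "Z1 * (adj U * U) = (adj U * U) * Z1"
  shows "(U * Z1 * adj U) * (U * Z2 * adj U) = U * (Z1 * Z2) * adj U"
proof -
  have "(U * Z1 * adj U) * (U * Z2 * adj U) = U * (Z1 * (adj U * U)) * Z2 * adj U" by (simp add: mult.assoc)
  also have "\<dots> = (U * (adj U * U)) * Z1 * Z2 * adj U" using c by (simp add: mult.assoc)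
  finally show ?thesis using UP by (simp add: mult.assoc)
qed

lemma conj_add: "U * Z1 * adj U + U * Z2 * adj U = U * (Z1 + Z2) * (adj U :: 'a::cstar_algebra)"
  by (simp add: algebra_simps)

lemma conj_adj: "adj (U * Z * adj U) = U * adj Z * (adj U :: 'a::cstar_algebra)"
  by (simp add: adj_mult adj_adj mult.assoc)

lemma comm_mult: "x * (P::'a::cstar_algebra) = P * x \<Longrightarrow> y * P = P * y \<Longrightarrow> (x * y) * P = P * (x * y)"
  by (metis mult.assoc)

lemma comm_add: "x * (P::'a::cstar_algebra) = P * x \<Longrightarrow> y * P = P * y \<Longrightarrow> (x + y) * P = P * (x + y)"
  by (simp add: algebra_simps)

lemma comm_one: "1 * (P::'a::cstar_algebra) = P * 1" by simp

lemma comm_adj: "x * (P::'a::cstar_algebra) = P * x \<Longrightarrow> adj P = P \<Longrightarrow> adj x * P = P * adj x"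
  by (metis adj_mult)

theorem lemma3p8:
  fixes Q U :: "'a::cstar_algebra"
  assumes "idempotent Q" and "partial_isometry U"
    and "adj U * U * Q = Q * adj U * U"
  shows "idempotent (U * Q * adj U) \<and>
         matched_proj (U * Q * adj U) = U * matched_proj Q * adj U"
proof -
  define P where "P = adj U * U"
  have QQ: "Q * Q = Q" using assms(1) idempotent_def by blast
  have PP: "P * P = P" and aP: "adj P = P"
    using assms(2) unfolding partial_isometry_def projection_def P_def by blast+
  have PQ: "Q * P = P * Q" using assms(3) by (simp add: P_def mult.assoc)
  have UP: "U * P = U"
  proof -
    define w where "w = U - U * P"
    have aw: "adj w = adj U - P * adj U" by (simp add: w_def adj_diff adj_mult aP)
    have "adj w * w = (adj U - P * adj U) * (U - U * P)" by (subst aw) (simp only: w_def)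
    also have "\<dots> = adj U * U - (adj U * U) * P - P * (adj U * U) + P * (adj U * U) * P"
      by (simp add: algebra_simps mult.assoc)
    also have "\<dots> = P - P * P - P * P + P * P * P" by (simp add: P_def)
    also have "\<dots> = 0" using PP by simp
    finally have "w = 0" by (simp add: adj_eq_zero_iff)
    thus ?thesis by (simp add: w_def)
  qed
  have UP': "U * (adj U * U) = U" using UP by (simp add: P_def)
  have PU': "P * adj U = adj U" using arg_cong[OF UP, of adj] by (simp add: adj_mult aP)
  define Q' where "Q' = adj Q"
  have Q'Q': "Q' * Q' = Q'" using QQ by (metis Q'_def adj_mult)
  have PQ': "Q' * P = P * Q'" unfolding Q'_def by (rule comm_adj[OF PQ aP])
  have idem: "idempotent (U * Q * adj U)"
  proof -
    have "(U * Q * adj U) * (U * Q * adj U) = U * (Q * Q) * adj U"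
      by (rule conj_mult[OF UP']) (use PQ in \<open>simp add: P_def\<close>)
    thus ?thesis using QQ by (simp add: idempotent_def)
  qed
  define A where "A = Q * Q'"
  have pA: "posn A" using posn_adj_mult[of Q'] by (simp add: A_def Q'_def adj_adj)
  have AP: "A * P = P * A" unfolding A_def by (rule comm_mult[OF PQ PQ'])
  obtain K where K: "posn K" "K * K = A" "\<And>z. z * A = A * z \<Longrightarrow> z * K = K * z"
    using root_ex[OF pA] by blast
  have aK: "adj K = K" using K(1) posn_def by blast
  have KP: "K * P = P * K" using K(3)[of P] AP by simp
  have cabsQ: "cabs (adj Q) = K"
    unfolding cabs_def using csqrt_eq[OF posn_positive[OF K(1)] K(2)] by (simp add: adj_adj A_def Q'_def)
  have cabsUQ: "cabs (adj (U * Q * adj U)) = U * K * adj U"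
  proof -
    have "adj (adj (U * Q * adj U)) * adj (U * Q * adj U) = (U * Q * adj U) * (U * Q' * adj U)"
      by (simp add: adj_adj conj_adj Q'_def)
    also have "\<dots> = U * A * adj U" unfolding A_def
      by (rule conj_mult[OF UP']) (use PQ in \<open>simp add: P_def\<close>)
    finally have e1: "adj (adj (U * Q * adj U)) * adj (U * Q * adj U) = U * A * adj U" .
    have e2: "(U * K * adj U) * (U * K * adj U) = U * A * adj U"
      using conj_mult[OF UP', of K K] KP K(2) by (simp add: P_def)
    obtain k' where k': "posn k'" "k' * k' = K" using root_ex[OF K(1)] by blast
    have "adj k' = k'" using k'(1) posn_def by blast
    hence "U * K * adj U = adj (k' * adj U) * (k' * adj U)"
    proof -
      have "adj (k' * adj U) * (k' * adj U) = U * (k' * k') * adj U"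
        using \<open>adj k' = k'\<close> by (simp add: adj_mult adj_adj mult.assoc)
      thus ?thesis using k'(2) by simp
    qed
    hence "positive (U * K * adj U)" unfolding positive_def by blast
    thus ?thesis unfolding cabs_def e1 using csqrt_eq e2 by blast
  qed
  define R where "R = Q + Q' - 1"
  have RQ: "R * Q = Q' * Q" using QQ by (simp add: R_def algebra_simps)
  have QR: "Q * R = Q * Q'" using QQ by (simp add: R_def algebra_simps)
  have RQ': "R * Q' = Q * Q'" using Q'Q' by (simp add: R_def algebra_simps)
  have Q'R: "Q' * R = Q' * Q" using Q'Q' by (simp add: R_def algebra_simps)
  have RRQ: "R * R * Q = Q * Q' * Q"
  proof -
    have "R * R * Q = R * (R * Q)" by (simp add: mult.assoc)
    also have "\<dots> = (R * Q') * Q" using RQ by (simp add: mult.assoc)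
    finally show ?thesis using RQ' by simp
  qed
  have QRR: "Q * (R * R) = Q * Q' * Q"
  proof -
    have "Q * (R * R) = (Q * R) * R" by (simp add: mult.assoc)
    also have "\<dots> = Q * (Q' * R)" using QR by (simp add: mult.assoc)
    finally show ?thesis using Q'R by (simp add: mult.assoc)
  qed
  have RRQ': "R * R * Q' = Q' * Q * Q'"
  proof -
    have "R * R * Q' = R * (R * Q')" by (simp add: mult.assoc)
    also have "\<dots> = (R * Q) * Q'" using RQ' by (simp add: mult.assoc)
    finally show ?thesis using RQ by simp
  qed
  have Q'RR: "Q' * (R * R) = Q' * Q * Q'"
  proof -
    have "Q' * (R * R) = (Q' * R) * R" by (simp add: mult.assoc)
    also have "\<dots> = Q' * (Q * R)" using Q'R by (simp add: mult.assoc)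
    finally show ?thesis using QR by (simp add: mult.assoc)
  qed
  define xx where "xx = Q' - Q"
  have "R * R = 1 + adj xx * xx"
    using QQ Q'Q' by (simp add: R_def xx_def Q'_def adj_diff adj_adj algebra_simps)
  hence "inv_ex (R * R)" using posn_one_plus_inv[OF posn_adj_mult[of xx]] by simp
  then obtain S where S: "R * R * S = 1" "S * (R * R) = 1" unfolding inv_ex_def by blast
  have aR: "adj R = R" by (simp add: R_def Q'_def adj_diff adj_add adj_adj add.commute)
  have aS: "adj S = S" by (rule inv_selfadj[OF S]) (simp add: adj_mult aR)
  have SQ: "Q * S = S * Q" by (rule inv_commute[OF S]) (use RRQ QRR in \<open>simp add: mult.assoc\<close>)
  have SQ': "Q' * S = S * Q'" by (rule inv_commute[OF S]) (use RRQ' Q'RR in \<open>simp add: mult.assoc\<close>)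
  have SA: "A * S = S * A" unfolding A_def using SQ SQ' by (metis mult.assoc)
  have RP: "R * P = P * R" unfolding R_def using PQ PQ' by (simp add: algebra_simps)
  have SP: "P * S = S * P" by (rule inv_commute[OF S]) (use RP in \<open>metis mult.assoc\<close>)
  have AA: "A * A = R * R * A"
    using RRQ by (simp add: A_def mult.assoc[symmetric])
  have AAS: "A * A * S = A"
  proof -
    have "A * A * S = R * R * (A * S)" using AA by (simp add: mult.assoc)
    also have "\<dots> = (R * R * S) * A" using SA by (simp add: mult.assoc)
    finally show ?thesis using S(1) by simp
  qed
  define G where "G = A * S"
  have aA: "adj A = A" using pA posn_def by blast
  have aG: "adj G = G" using aA aS SA by (simp add: G_def adj_mult)
  define Y where "Y = A * S * S"
  have aY: "adj Y = Y"
  proof -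
    have "adj Y = S * S * A" using aA aS by (simp add: Y_def adj_mult mult.assoc)
    also have "\<dots> = Y" using SA by (simp add: Y_def mult.assoc)
    finally show ?thesis .
  qed
  have AY: "A * Y = G" using AAS by (simp add: Y_def G_def mult.assoc[symmetric])
  have SSA: "S * S * A = A * S * S"
  proof -
    have "S * S * A = S * (S * A)" by (simp add: mult.assoc)
    also have "\<dots> = S * (A * S)" using SA by simp
    also have "\<dots> = (S * A) * S" by (simp add: mult.assoc)
    also have "\<dots> = A * S * S" using SA by simp
    finally show ?thesis .
  qed
  have YA: "Y * A = G"
  proof -
    have "Y * A = A * (S * S * A)" by (simp add: Y_def mult.assoc)
    also have "\<dots> = A * A * S * S" using SSA by (simp add: mult.assoc)
    finally show ?thesis using AAS by (simp add: G_def)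
  qed
  have YAY: "Y * A * Y = Y"
  proof -
    have "Y * A * Y = A * (S * A) * S * S" using YA by (simp add: G_def Y_def mult.assoc)
    also have "\<dots> = (A * A * S) * S * S" using SA by (simp add: mult.assoc)
    finally show ?thesis using AAS by (simp add: Y_def)
  qed
  have GA: "G * A = A"
  proof -
    have "G * A = A * (S * A)" by (simp add: G_def mult.assoc)
    also have "\<dots> = A * A * S" using SA by (simp add: mult.assoc)
    finally show ?thesis using AAS by simp
  qed
  have GK: "G * K = K"
  proof -
    define w where "w = G * K - K"
    have "w * adj w = (G * (K * K) - K * K) * G - (G * (K * K) - K * K)"
      using aK aG by (simp add: w_def adj_diff adj_mult algebra_simps mult.assoc)
    also have "\<dots> = 0" using K(2) GA by (simp add: algebra_simps aG)
    finally have "norm w ^ 2 = 0" by (simp add: norm_sq_adj')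
    thus ?thesis by (simp add: w_def)
  qed
  have KG: "K * G = K" using arg_cong[OF GK, of adj] by (simp add: adj_mult aK aG)
  define X where "X = K * Y"
  have mp1: "K * X * K = K" using AY GK K(2) by (simp add: X_def mult.assoc[symmetric])
  have mp2: "X * K * X = X"
  proof -
    have "X * K * X = K * (Y * (K * K) * Y)" by (simp add: X_def mult.assoc)
    thus ?thesis using K(2) YAY by (simp add: X_def)
  qed
  have mp3: "adj (K * X) = K * X" using AY aG K(2) by (simp add: X_def mult.assoc[symmetric])
  have mp4: "adj (X * K) = X * K" using aK aY by (simp add: X_def adj_mult mult.assoc)
  have mpK: "mp_inv K = X" by (rule mp_inv_eq[OF mp1 mp2 mp3 mp4])
  have YP: "Y * P = P * Y" unfolding Y_def using AP SP by (metis mult.assoc)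
  have XP: "X * P = P * X" unfolding X_def using KP YP by (metis mult.assoc)
  have cP: "\<And>Z. Z * P = P * Z \<Longrightarrow> Z * (adj U * U) = (adj U * U) * Z" by (simp add: P_def)
  have mpUK: "mp_inv (U * K * adj U) = U * X * adj U"
  proof (rule mp_inv_eq)
    have e1: "(U * K * adj U) * (U * X * adj U) = U * (K * X) * adj U" by (rule conj_mult[OF UP' cP[OF KP]])
    have e2: "(U * X * adj U) * (U * K * adj U) = U * (X * K) * adj U" by (rule conj_mult[OF UP' cP[OF XP]])
    show "U * K * adj U * (U * X * adj U) * (U * K * adj U) = U * K * adj U"
      unfolding e1 by (subst conj_mult[OF UP' cP[OF comm_mult[OF KP XP]]]) (simp add: mp1)
    show "U * X * adj U * (U * K * adj U) * (U * X * adj U) = U * X * adj U"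
      unfolding e2 by (subst conj_mult[OF UP' cP[OF comm_mult[OF XP KP]]]) (simp add: mp2)
    show "adj (U * K * adj U * (U * X * adj U)) = U * K * adj U * (U * X * adj U)"
      unfolding e1 conj_adj mp3 ..
    show "adj (U * X * adj U * (U * K * adj U)) = U * X * adj U * (U * K * adj U)"
      unfolding e2 conj_adj mp4 ..
  qed
  obtain V where V: "(1 + K) * V = 1" "V * (1 + K) = 1" using posn_one_plus_inv[OF K(1)] inv_ex_def by blast
  have "P * V = V * P" by (rule inv_commute[OF V]) (use KP in \<open>simp add: algebra_simps\<close>)
  hence VP: "V * P = P * V" by simp
  have ainvK: "ainv (K + 1) = V" by (rule ainv_eq) (use V in \<open>simp_all add: add.commute\<close>)
  have ainvUK: "ainv (U * K * adj U + 1) = 1 + U * (V - 1) * adj U"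
  proof (rule ainv_eq)
    have V1P: "(V - 1) * P = P * (V - 1)" using VP by (simp add: algebra_simps)
    have "(U * K * adj U + 1) * (1 + U * (V - 1) * adj U)
        = 1 + (U * (V - 1) * adj U + U * K * adj U + (U * K * adj U) * (U * (V - 1) * adj U))"
      by (simp add: algebra_simps)
    also have "(U * K * adj U) * (U * (V - 1) * adj U) = U * (K * (V - 1)) * adj U"
      by (rule conj_mult[OF UP' cP[OF KP]])
    also have "U * (V - 1) * adj U + U * K * adj U + U * (K * (V - 1)) * adj U
             = U * ((1 + K) * V - 1) * adj U" by (simp add: algebra_simps)
    finally show "(U * K * adj U + 1) * (1 + U * (V - 1) * adj U) = 1" using V by simp
    have "(1 + U * (V - 1) * adj U) * (U * K * adj U + 1)
        = 1 + (U * (V - 1) * adj U + U * K * adj U + (U * (V - 1) * adj U) * (U * K * adj U))"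
      by (simp add: algebra_simps)
    also have "(U * (V - 1) * adj U) * (U * K * adj U) = U * ((V - 1) * K) * adj U"
      by (rule conj_mult[OF UP' cP[OF V1P]])
    also have "U * (V - 1) * adj U + U * K * adj U + U * ((V - 1) * K) * adj U
             = U * (V * (1 + K) - 1) * adj U" by (simp add: algebra_simps)
    finally show "(1 + U * (V - 1) * adj U) * (U * K * adj U + 1) = 1" using V by simp
  qed
  have mQ: "matched_proj Q = (1/2::real) *\<^sub>R ((K + Q') * X * V * (K + Q))"
    unfolding matched_proj_def cabsQ mpK ainvK Q'_def ..
  have mUQ: "matched_proj (U * Q * adj U) = (1/2::real) *\<^sub>R ((U * K * adj U + U * Q' * adj U) * (U * X * adj U)
                 * (1 + U * (V - 1) * adj U) * (U * K * adj U + U * Q * adj U))"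
    unfolding matched_proj_def cabsUQ mpUK ainvUK by (simp add: conj_adj Q'_def)
  have KQ'P: "(K + Q') * P = P * (K + Q')" by (rule comm_add[OF KP PQ'])
  have KQP: "(K + Q) * P = P * (K + Q)" by (rule comm_add[OF KP PQ])
  have XVP: "(X * V) * P = P * (X * V)" by (rule comm_mult[OF XP VP])
  have XV1P: "(X * (V - 1)) * P = P * (X * (V - 1))" by (rule comm_mult[OF XP]) (use VP in \<open>simp add: algebra_simps\<close>)
  have s2: "(U * X * adj U) * (1 + U * (V - 1) * adj U) = U * (X * V) * adj U"
  proof -
    have "(U * X * adj U) * (1 + U * (V - 1) * adj U) = U * X * adj U + (U * X * adj U) * (U * (V - 1) * adj U)"
      by (simp add: algebra_simps)
    also have "(U * X * adj U) * (U * (V - 1) * adj U) = U * (X * (V - 1)) * adj U"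
      by (rule conj_mult[OF UP' cP[OF XP]])
    finally show ?thesis by (simp add: algebra_simps)
  qed
  have "(U * K * adj U + U * Q' * adj U) * (U * X * adj U) * (1 + U * (V - 1) * adj U) * (U * K * adj U + U * Q * adj U)
      = (U * (K + Q') * adj U) * (U * (X * V) * adj U) * (U * (K + Q) * adj U)"
    by (simp only: conj_add s2 mult.assoc[of "U * (K + Q') * adj U"])
  also have "\<dots> = U * ((K + Q') * (X * V)) * adj U * (U * (K + Q) * adj U)"
    by (subst conj_mult[OF UP' cP[OF KQ'P]]) (rule refl)
  also have "\<dots> = U * ((K + Q') * (X * V) * (K + Q)) * adj U"
    by (rule conj_mult[OF UP' cP[OF comm_mult[OF KQ'P XVP]]])
  finally have main: "(U * K * adj U + U * Q' * adj U) * (U * X * adj U) * (1 + U * (V - 1) * adj U) * (U * K * adj U + U * Q * adj U)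
      = U * ((K + Q') * X * V * (K + Q)) * adj U" by (simp add: mult.assoc)
  have "matched_proj (U * Q * adj U) = U * matched_proj Q * adj U"
    unfolding mUQ mQ main by simp
  thus ?thesis using idem by simp
qed

end
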